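(* Let $\mathcal{H}=\mathbb{C}^{d_1}$, $\mathcal{K}=\mathbb{C}^{d_2}$ with $d_1\ge3$ odd, and let $\sigma_1,\dots,\sigma_{d_1d_2}\ge0$ be given. Consider the problem of minimizing $\frac1{d_1d_2}\operatorname{tr}[A\,\overline A^{T_2}]$ over all $A\in\mathcal{B}(\mathcal{H}\otimes\mathcal{K})$ with $A^T=A$ and singular values $\sigma_1,\dots,\sigma_{d_1d_2}$. Then every local minimizer $A$ of this problem satisfies that $A\,\overline A^{T_2}$ is Hermitian.
   Context: The partial transposes are taken with respect to a fixed product basis, defined by linear extension of $(X\otimes Y)^{T_1}=X^T\otimes Y$ and $(X\otimes Y)^{T_2}=X\otimes Y^T$; $\overline A$ is the entrywise complex conjugate, and $\overline A^{T_2}=(\overline A)^{T_2}$. *)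

theory Defs
  imports "Jordan_Normal_Form.Matrix" "Jordan_Normal_Form.Char_Poly"
begin

text \<open>Matrices on C^d1 (x) C^d2 are d1*d2 x d1*d2 complex matrices; the product
basis vector e_i (x) f_j (i < d1, j < d2) has index i*d2 + j.\<close>

definition cmtrace :: "complex mat \<Rightarrow> complex" where
  "cmtrace A = (\<Sum>i<dim_row A. A $$ (i, i))"

definition conj_mat :: "complex mat \<Rightarrow> complex mat" where
  "conj_mat A = map_mat cnj A"

definition adjoint_cmat :: "complex mat \<Rightarrow> complex mat" where
  "adjoint_cmat A = conj_mat (transpose_mat A)"

definition hermitian_cmat :: "complex mat \<Rightarrow> bool" where
  "hermitian_cmat A \<longleftrightarrow> adjoint_cmat A = A"

text \<open>Partial transpose on the second factor: (X (x) Y)^T2 = X (x) Y^T, i.e.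
  A^T2_{(i,j),(i',j')} = A_{(i,j'),(i',j)}.\<close>
definition ptrans2 :: "nat \<Rightarrow> nat \<Rightarrow> complex mat \<Rightarrow> complex mat" where
  "ptrans2 d1 d2 A = mat (d1 * d2) (d1 * d2)
     (\<lambda>(r, c). A $$ ((r div d2) * d2 + c mod d2, (c div d2) * d2 + r mod d2))"

text \<open>The singular values of an n x n matrix A (with multiplicity) are the
  nonnegative square roots of the eigenvalues of A^* A (with algebraic multiplicity).
  So A has singular values sigma_0..sigma_{n-1} (all >= 0) iff the characteristic
  polynomial of A^* A is prod_k (x - sigma_k^2).\<close>
definition has_singular_values :: "nat \<Rightarrow> complex mat \<Rightarrow> (nat \<Rightarrow> real) \<Rightarrow> bool" where
  "has_singular_values n A \<sigma> \<longleftrightarrow> A \<in> carrier_mat n n \<and> (\<forall>k<n. \<sigma> k \<ge> 0) \<and>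
     char_poly (adjoint_cmat A * A) = (\<Prod>k<n. [: - complex_of_real ((\<sigma> k)\<^sup>2), 1 :])"

definition feasible :: "nat \<Rightarrow> nat \<Rightarrow> (nat \<Rightarrow> real) \<Rightarrow> complex mat \<Rightarrow> bool" where
  "feasible d1 d2 \<sigma> A \<longleftrightarrow> A \<in> carrier_mat (d1 * d2) (d1 * d2) \<and> transpose_mat A = A \<and>
     has_singular_values (d1 * d2) A \<sigma>"

text \<open>Objective (1/(d1 d2)) tr[A conj(A)^T2]; it is real on the feasible set, we take its real part.\<close>
definition objective :: "nat \<Rightarrow> nat \<Rightarrow> complex mat \<Rightarrow> real" where
  "objective d1 d2 A = Re (cmtrace (A * ptrans2 d1 d2 (conj_mat A))) / real (d1 * d2)"

definition mat_dist :: "complex mat \<Rightarrow> complex mat \<Rightarrow> real" where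
  "mat_dist A B = sqrt (\<Sum>i<dim_row A. \<Sum>j<dim_col A. (cmod (A $$ (i, j) - B $$ (i, j)))\<^sup>2)"

definition local_minimizer :: "nat \<Rightarrow> nat \<Rightarrow> (nat \<Rightarrow> real) \<Rightarrow> complex mat \<Rightarrow> bool" where
  "local_minimizer d1 d2 \<sigma> A \<longleftrightarrow> feasible d1 d2 \<sigma> A \<and>
     (\<exists>\<epsilon>>0. \<forall>B. feasible d1 d2 \<sigma> B \<and> mat_dist A B < \<epsilon> \<longrightarrow>
        objective d1 d2 A \<le> objective d1 d2 B)"

end

theory Submission
  imports Defs
begin


lemma pi_lt: fixes d1 d2 a b :: nat assumes "a < d1 * d2" "b < d2" "0 < d2"
  shows "(a div d2) * d2 + b < d1 * d2"
proof -
  have "a div d2 < d1" using assms by (simp add: less_mult_imp_div_less)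
  then have "a div d2 + 1 \<le> d1" by simp
  then have "(a div d2 + 1) * d2 \<le> d1 * d2" by (rule mult_right_mono) simp
  then show ?thesis using assms by (simp add: algebra_simps)
qed

definition Qf :: "nat \<Rightarrow> nat \<Rightarrow> complex mat \<Rightarrow> complex mat \<Rightarrow> complex" where
  "Qf d1 d2 X Y = cmtrace (X * ptrans2 d1 d2 (conj_mat Y))"

definition pim :: "nat \<Rightarrow> nat \<times> nat \<Rightarrow> nat \<times> nat" where
  "pim d2 rc = ((snd rc div d2) * d2 + fst rc mod d2, (fst rc div d2) * d2 + snd rc mod d2)"

lemma Q_entry:
  assumes X: "X \<in> carrier_mat (d1*d2) (d1*d2)" and Y: "Y \<in> carrier_mat (d1*d2) (d1*d2)" and d2: "0 < d2"
  shows "Qf d1 d2 X Y = (\<Sum>r<d1*d2. \<Sum>c<d1*d2. X $$ (r,c) * cnj (Y $$ pim d2 (r,c)))"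
proof -
  have "Qf d1 d2 X Y = (\<Sum>r<d1*d2. (X * ptrans2 d1 d2 (conj_mat Y)) $$ (r,r))"
    unfolding Qf_def cmtrace_def using X by simp
  also have "\<dots> = (\<Sum>r<d1*d2. \<Sum>c<d1*d2. X $$ (r,c) * cnj (Y $$ pim d2 (r,c)))"
  proof (rule sum.cong[OF refl])
    fix r assume r: "r \<in> {..<d1*d2}"
    have "(X * ptrans2 d1 d2 (conj_mat Y)) $$ (r,r) = (\<Sum>c\<in>{0..<d1*d2}. X $$ (r,c) * (ptrans2 d1 d2 (conj_mat Y)) $$ (c,r))"
      using X r by (simp add: ptrans2_def scalar_prod_def)
    also have "\<dots> = (\<Sum>c<d1*d2. X $$ (r,c) * cnj (Y $$ pim d2 (r,c)))"
      using X Y r d2 by (intro sum.cong) (auto simp: ptrans2_def conj_mat_def pim_def pi_lt)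
    finally show "(X * ptrans2 d1 d2 (conj_mat Y)) $$ (r,r) = (\<Sum>c<d1*d2. X $$ (r,c) * cnj (Y $$ pim d2 (r,c)))" .
  qed
  finally show ?thesis .
qed

lemma pim_invol: "0 < d2 \<Longrightarrow> pim d2 (pim d2 rc) = rc"
  by (cases rc) (simp add: pim_def)

lemma pim_in: assumes "0 < d2" "rc \<in> {..<d1*d2} \<times> {..<d1*d2}"
  shows "pim d2 rc \<in> {..<d1*d2} \<times> {..<d1*d2}"
  using assms by (cases rc) (auto simp: pim_def pi_lt)

lemma Q_conj:
  assumes X: "X \<in> carrier_mat (d1*d2) (d1*d2)" and Y: "Y \<in> carrier_mat (d1*d2) (d1*d2)" and d2: "0 < d2"
  shows "Qf d1 d2 X Y = cnj (Qf d1 d2 Y X)"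
proof -
  let ?S = "{..<d1*d2} \<times> {..<d1*d2}"
  have "Qf d1 d2 X Y = (\<Sum>rc\<in>?S. X $$ rc * cnj (Y $$ pim d2 rc))"
    unfolding Q_entry[OF X Y d2] sum.cartesian_product by simp
  also have "\<dots> = (\<Sum>rc\<in>?S. X $$ pim d2 rc * cnj (Y $$ pim d2 (pim d2 rc)))"
    by (rule sum.reindex_bij_witness[of _ "pim d2" "pim d2"]) (use d2 pim_invol pim_in in auto)
  also have "\<dots> = (\<Sum>rc\<in>?S. cnj (Y $$ rc) * X $$ pim d2 rc)"
    using d2 by (simp add: pim_invol mult.commute)
  also have "\<dots> = cnj (Qf d1 d2 Y X)"
    unfolding Q_entry[OF Y X d2] sum.cartesian_product by simp
  finally show ?thesis .
qed

lemma Q_add_left: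
  assumes "X1 \<in> carrier_mat (d1*d2) (d1*d2)" "X2 \<in> carrier_mat (d1*d2) (d1*d2)" "Y \<in> carrier_mat (d1*d2) (d1*d2)" "0 < d2"
  shows "Qf d1 d2 (X1 + X2) Y = Qf d1 d2 X1 Y + Qf d1 d2 X2 Y"
  using assms by (simp add: Q_entry sum.distrib[symmetric] distrib_right)

lemma Q_smult_left:
  assumes "X \<in> carrier_mat (d1*d2) (d1*d2)" "Y \<in> carrier_mat (d1*d2) (d1*d2)" "0 < d2"
  shows "Qf d1 d2 (c \<cdot>\<^sub>m X) Y = c * Qf d1 d2 X Y"
  using assms by (simp add: Q_entry sum_distrib_left mult.assoc)

lemma Q_add_right:
  assumes "X \<in> carrier_mat (d1*d2) (d1*d2)" "Y1 \<in> carrier_mat (d1*d2) (d1*d2)" "Y2 \<in> carrier_mat (d1*d2) (d1*d2)" "0 < d2"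
  shows "Qf d1 d2 X (Y1 + Y2) = Qf d1 d2 X Y1 + Qf d1 d2 X Y2"
  using assms by (simp add: Q_conj[of X] Q_add_left)

lemma Q_smult_right:
  assumes "X \<in> carrier_mat (d1*d2) (d1*d2)" "Y \<in> carrier_mat (d1*d2) (d1*d2)" "0 < d2"
  shows "Qf d1 d2 X (c \<cdot>\<^sub>m Y) = cnj c * Qf d1 d2 X Y"
  using assms by (simp add: Q_conj[of X] Q_smult_left)

lemma norm4: "cmod (a + b + c + d) \<le> cmod a + cmod b + cmod c + cmod d"
proof -
  have "cmod (a + b + c + d) \<le> cmod (a + b + c) + cmod d" by (rule norm_triangle_ineq)
  moreover have "cmod (a + b + c) \<le> cmod (a + b) + cmod c" by (rule norm_triangle_ineq)
  moreover have "cmod (a + b) \<le> cmod a + cmod b" by (rule norm_triangle_ineq)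
  ultimately show ?thesis by linarith
qed

lemma re_expand: "Re (a + cnj (u * (e + u * f)) + u * (e + u * f) + complex_of_real r * g) - Re a - 2 * Re (u * e)
     = 2 * Re (u * u * f) + r * Re g"
  by (simp add: distrib_left mult.assoc) (simp add: algebra_simps)

lemma expansion:
  assumes A: "A \<in> carrier_mat (d1*d2) (d1*d2)" and E: "E \<in> carrier_mat (d1*d2) (d1*d2)"
    and F: "F \<in> carrier_mat (d1*d2) (d1*d2)" and d2: "0 < d2" and u: "cmod u \<le> 2"
  shows "\<bar>Re (Qf d1 d2 (A + u \<cdot>\<^sub>m (E + u \<cdot>\<^sub>m F)) (A + u \<cdot>\<^sub>m (E + u \<cdot>\<^sub>m F))) - Re (Qf d1 d2 A A)
      - 2 * Re (u * Qf d1 d2 E A)\<bar>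
    \<le> (cmod u)\<^sup>2 * (2 * cmod (Qf d1 d2 F A) + cmod (Qf d1 d2 E E) + 2 * cmod (Qf d1 d2 E F)
        + 2 * cmod (Qf d1 d2 F E) + 4 * cmod (Qf d1 d2 F F))"
proof -
  define Q where "Q = Qf d1 d2"
  define G where "G = E + u \<cdot>\<^sub>m F"
  define D where "D = u \<cdot>\<^sub>m G"
  have G: "G \<in> carrier_mat (d1*d2) (d1*d2)" using E F by (simp add: G_def)
  have D: "D \<in> carrier_mat (d1*d2) (d1*d2)" using G by (simp add: D_def)
  have QGA: "Q G A = Q E A + u * Q F A" unfolding G_def Q_def using A E F d2 by (simp add: Q_add_left Q_smult_left)
  have QGG: "Q G G = Q E E + cnj u * Q E F + u * Q F E + u * cnj u * Q F F"
    unfolding G_def Q_def using A E F d2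
    by (simp add: Q_add_left Q_smult_left Q_add_right Q_smult_right distrib_left distrib_right mult.assoc)
  have QAD: "Q A D = cnj (Q D A)" unfolding Q_def by (rule Q_conj[OF A D d2])
  have QDA: "Q D A = u * Q G A" unfolding D_def Q_def using A G d2 by (simp add: Q_smult_left)
  have QDD: "Q D D = u * cnj u * Q G G" unfolding D_def Q_def using G d2
    by (simp add: Q_smult_left Q_smult_right)
  have full: "Q (A + D) (A + D) = Q A A + Q A D + Q D A + Q D D"
    unfolding Q_def using A D d2 by (simp add: Q_add_left Q_add_right)
  have uu: "u * cnj u = complex_of_real ((cmod u)\<^sup>2)" by (rule complex_norm_square[symmetric])
  have "Re (Q (A + D) (A + D)) - Re (Q A A) - 2 * Re (u * Q E A)
     = 2 * Re (u * u * Q F A) + (cmod u)\<^sup>2 * Re (Q G G)"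
    unfolding full QAD QDA QDD QGA uu by (rule re_expand)
  moreover have "\<bar>2 * Re (u * u * Q F A)\<bar> \<le> (cmod u)\<^sup>2 * (2 * cmod (Q F A))"
  proof -
    have "\<bar>Re (u * u * Q F A)\<bar> \<le> cmod (u * u * Q F A)" by (rule abs_Re_le_cmod)
    also have "\<dots> = (cmod u)\<^sup>2 * cmod (Q F A)" by (simp add: norm_mult power2_eq_square)
    finally show ?thesis by simp
  qed
  moreover have "\<bar>(cmod u)\<^sup>2 * Re (Q G G)\<bar> \<le> (cmod u)\<^sup>2 * (cmod (Q E E) + 2 * cmod (Q E F)
        + 2 * cmod (Q F E) + 4 * cmod (Q F F))"
  proof -
    have "\<bar>Re (Q G G)\<bar> \<le> cmod (Q G G)" by (rule abs_Re_le_cmod)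
    also have "\<dots> \<le> cmod (Q E E) + cmod (cnj u * Q E F) + cmod (u * Q F E) + cmod (u * cnj u * Q F F)"
      unfolding QGG by (rule norm4)
    also have "\<dots> \<le> cmod (Q E E) + 2 * cmod (Q E F) + 2 * cmod (Q F E) + 4 * cmod (Q F F)"
    proof -
      have c: "cmod (cnj u * Q E F) \<le> 2 * cmod (Q E F)" using u by (simp add: norm_mult mult_right_mono)
      have d: "cmod (u * Q F E) \<le> 2 * cmod (Q F E)" using u by (simp add: norm_mult mult_right_mono)
      have "cmod u * cmod u \<le> 2 * 2" using u by (intro mult_mono) auto
      then have e: "cmod (u * cnj u * Q F F) \<le> 4 * cmod (Q F F)" by (simp add: norm_mult mult_right_mono)
      show ?thesis using c d e by linarith
    qed
    finally have "\<bar>Re (Q G G)\<bar> \<le> cmod (Q E E) + 2 * cmod (Q E F) + 2 * cmod (Q F E) + 4 * cmod (Q F F)" .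
    then show ?thesis by (simp add: abs_mult mult_left_mono)
  qed
  moreover have "(cmod u)\<^sup>2 * (2 * cmod (Q F A)) + (cmod u)\<^sup>2 * (cmod (Q E E) + 2 * cmod (Q E F)
        + 2 * cmod (Q F E) + 4 * cmod (Q F F)) = (cmod u)\<^sup>2 * (2 * cmod (Q F A) + cmod (Q E E) + 2 * cmod (Q E F)
        + 2 * cmod (Q F E) + 4 * cmod (Q F F))" by (simp only: distrib_left[symmetric] add.assoc)
  ultimately have "\<bar>Re (Q (A + D) (A + D)) - Re (Q A A) - 2 * Re (u * Q E A)\<bar> \<le>
     (cmod u)\<^sup>2 * (2 * cmod (Q F A) + cmod (Q E E) + 2 * cmod (Q E F)
        + 2 * cmod (Q F E) + 4 * cmod (Q F F))" by linarith
  then show ?thesis unfolding D_def G_def Q_def .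
qed


lemma zero_lin:
  fixes a C d :: real and e :: "real \<Rightarrow> real"
  assumes d: "0 < d" and ge: "\<And>t. \<bar>t\<bar> < d \<Longrightarrow> 0 \<le> a * t + e t"
    and le: "\<And>t. \<bar>t\<bar> < d \<Longrightarrow> \<bar>e t\<bar> \<le> C * t\<^sup>2"
  shows "a = 0"
proof (rule ccontr)
  assume a: "a \<noteq> 0"
  define h where "h = min (d/2) (\<bar>a\<bar> / (2 * (\<bar>C\<bar> + 1)))"
  have hpos: "0 < h" using a d by (simp add: h_def)
  have hd: "h < d" using d by (simp add: h_def)
  have h2: "h * (2 * (\<bar>C\<bar> + 1)) \<le> \<bar>a\<bar>"
  proof -
    have "h \<le> \<bar>a\<bar> / (2 * (\<bar>C\<bar> + 1))" by (simp add: h_def)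
    then show ?thesis by (simp add: field_simps)
  qed
  define t where "t = (if a > 0 then - h else h)"
  have tabs: "\<bar>t\<bar> = h" using hpos by (simp add: t_def)
  have at: "a * t = - \<bar>a\<bar> * h" using a by (simp add: t_def)
  have "0 \<le> a * t + e t" using ge tabs hd by simp
  moreover have "e t \<le> C * t\<^sup>2" using le[of t] tabs hd by simp
  moreover have "C * t\<^sup>2 \<le> \<bar>C\<bar> * h * h"
  proof -
    have "t\<^sup>2 = h * h" by (metis abs_mult_self_eq power2_eq_square tabs)
    moreover have "C * (h*h) \<le> \<bar>C\<bar> * (h*h)" by (rule mult_right_mono) auto
    ultimately show ?thesis by (simp add: mult.assoc)
  qed
  moreover have "\<bar>C\<bar> * h * h < \<bar>a\<bar> * h"
  proof -
    have e1: "h * (2 * (\<bar>C\<bar> + 1)) = \<bar>C\<bar>*h + (\<bar>C\<bar>*h + 2*h)" by (simp add: algebra_simps)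
    have e2: "0 \<le> \<bar>C\<bar>*h" using hpos by simp
    have "\<bar>C\<bar> * h < \<bar>a\<bar>" using h2 hpos e1 e2 by linarith
    then show ?thesis using hpos by (simp add: mult_strict_right_mono)
  qed
  ultimately show False using at by linarith
qed
lemma onept: "0 < 1 + (t::real)\<^sup>2"
proof -
  have "0 \<le> t * t" by simp
  then show ?thesis unfolding power2_eq_square by linarith
qed

definition ut :: "real \<Rightarrow> complex" where
  "ut t = Complex (- 2 * t\<^sup>2 / (1 + t\<^sup>2)) (2 * t / (1 + t\<^sup>2))"

lemma ut_norm2: "(cmod (ut t))\<^sup>2 = 4 * t\<^sup>2 / (1 + t\<^sup>2)"
proof -
  have p: "0 < 1 + t\<^sup>2" using zero_le_power2[of t] by linarith
  have "(cmod (ut t))\<^sup>2 = (- 2 * t\<^sup>2 / (1 + t\<^sup>2))\<^sup>2 + (2 * t / (1 + t\<^sup>2))\<^sup>2"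
    unfolding ut_def by (simp add: cmod_def)
  also have "\<dots> = 4 * t\<^sup>2 * (t\<^sup>2 + 1) / (1 + t\<^sup>2)\<^sup>2"
    by (simp add: power_divide) (simp add: add_divide_distrib[symmetric] algebra_simps power2_eq_square power4_eq_xxxx)
  also have "\<dots> = 4 * t\<^sup>2 / (1 + t\<^sup>2)" using p by (simp add: power2_eq_square add.commute)
  finally show ?thesis .
qed

lemma ut_norm2_le: "(cmod (ut t))\<^sup>2 \<le> 4 * t\<^sup>2"
proof -
  have p: "1 \<le> 1 + t\<^sup>2" by simp
  have "4 * t\<^sup>2 / (1 + t\<^sup>2) \<le> 4 * t\<^sup>2 / 1"
    by (rule divide_left_mono) (use p onept[of t] in auto)
  then show ?thesis by (simp add: ut_norm2)
qed

lemma ut_unit: "ut t + cnj (ut t) + ut t * cnj (ut t) = 0"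
proof -
  have p: "0 < 1 + t\<^sup>2" using zero_le_power2[of t] by linarith
  have "ut t * cnj (ut t) = complex_of_real (4 * t\<^sup>2 / (1 + t\<^sup>2))"
    using complex_norm_square[of "ut t"] by (simp add: ut_norm2)
  moreover have "ut t + cnj (ut t) = complex_of_real (- 4 * t\<^sup>2 / (1 + t\<^sup>2))"
    unfolding ut_def by (simp add: complex_eq_iff)
  ultimately show ?thesis by simp
qed

lemma param_lemma:
  fixes tau :: complex and K d :: real and g :: "real \<Rightarrow> real"
  assumes d: "0 < d" and ge: "\<And>t. \<bar>t\<bar> < d \<Longrightarrow> 0 \<le> 2 * Re (ut t * tau) + g t"
    and le: "\<And>t. \<bar>t\<bar> < d \<Longrightarrow> \<bar>g t\<bar> \<le> (cmod (ut t))\<^sup>2 * K"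
  shows "Im tau = 0"
proof -
  define e where "e t = 2 * Re (ut t * tau) + 4 * t * Im tau + g t" for t
  define C where "C = 4 * \<bar>Re tau\<bar> + 4 * \<bar>Im tau\<bar> + 4 * \<bar>K\<bar>"
  have "- 4 * Im tau = 0"
  proof (rule zero_lin[of "min d 1" _ e C])
    show "0 < min d 1" using d by simp
    fix t assume t: "\<bar>t\<bar> < min d 1"
    show "0 \<le> - 4 * Im tau * t + e t" using ge[of t] t by (simp add: e_def)
    have p: "0 < 1 + t\<^sup>2" using zero_le_power2[of t] by linarith
    have key: "2 * Re (ut t * tau) + 4 * t * Im tau = (- 4 * t\<^sup>2 * Re tau + 4 * t^3 * Im tau) / (1 + t\<^sup>2)"
    proof -
      have r: "Re (ut t * tau) = (- 2 * t\<^sup>2 * Re tau - 2 * t * Im tau) / (1 + t\<^sup>2)"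
        unfolding ut_def by (simp add: diff_divide_distrib)
      have "2 * ((- 2 * t\<^sup>2 * Re tau - 2 * t * Im tau) / (1 + t\<^sup>2)) + 4 * t * Im tau
          = (2 * (- 2 * t\<^sup>2 * Re tau - 2 * t * Im tau) + 4 * t * Im tau * (1 + t\<^sup>2)) / (1 + t\<^sup>2)"
        using p by (simp add: add_divide_distrib)
      also have "\<dots> = (- 4 * t\<^sup>2 * Re tau + 4 * t^3 * Im tau) / (1 + t\<^sup>2)"
        by (simp add: algebra_simps power2_eq_square power3_eq_cube)
      finally show ?thesis unfolding r .
    qed
    have b1: "\<bar>t\<^sup>2 / (1 + t\<^sup>2)\<bar> \<le> t\<^sup>2"
    proof -
      have "t\<^sup>2 / (1 + t\<^sup>2) \<le> t\<^sup>2 / 1" by (rule divide_left_mono) (use p in auto)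
      then show ?thesis using p by simp
    qed
    have b2: "\<bar>t^3 / (1 + t\<^sup>2)\<bar> \<le> t\<^sup>2"
    proof -
      have "t * t * \<bar>t\<bar> \<le> t * t * 1" using t by (intro mult_left_mono) auto
      then have "\<bar>t^3\<bar> \<le> t\<^sup>2"
        by (simp add: power3_eq_cube power2_eq_square abs_mult)
      moreover have "\<bar>t^3 / (1 + t\<^sup>2)\<bar> \<le> \<bar>t^3\<bar>"
      proof -
        have "\<bar>t^3\<bar> * 1 \<le> \<bar>t^3\<bar> * (1 + t\<^sup>2)" by (rule mult_left_mono) auto
        then show ?thesis using p by (simp add: abs_divide divide_le_eq)
      qed
      ultimately show ?thesis by linarith
    qed
    have "\<bar>(- 4 * t\<^sup>2 * Re tau + 4 * t^3 * Im tau) / (1 + t\<^sup>2)\<bar>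
        \<le> 4 * \<bar>Re tau\<bar> * \<bar>t\<^sup>2 / (1 + t\<^sup>2)\<bar> + 4 * \<bar>Im tau\<bar> * \<bar>t^3 / (1 + t\<^sup>2)\<bar>"
    proof -
      have "(- 4 * t\<^sup>2 * Re tau + 4 * t^3 * Im tau) / (1 + t\<^sup>2)
          = (- 4 * Re tau) * (t\<^sup>2 / (1 + t\<^sup>2)) + (4 * Im tau) * (t^3 / (1 + t\<^sup>2))"
        by (simp add: add_divide_distrib diff_divide_distrib mult.commute mult.left_commute)
      moreover have "\<bar>(- 4 * Re tau) * (t\<^sup>2 / (1 + t\<^sup>2)) + (4 * Im tau) * (t^3 / (1 + t\<^sup>2))\<bar>
         \<le> \<bar>(- 4 * Re tau) * (t\<^sup>2 / (1 + t\<^sup>2))\<bar> + \<bar>(4 * Im tau) * (t^3 / (1 + t\<^sup>2))\<bar>"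
        by (rule abs_triangle_ineq)
      ultimately show ?thesis by (simp add: abs_mult)
    qed
    also have "\<dots> \<le> 4 * \<bar>Re tau\<bar> * t\<^sup>2 + 4 * \<bar>Im tau\<bar> * t\<^sup>2"
      using b1 b2 by (intro add_mono mult_left_mono) auto
    finally have e1: "\<bar>2 * Re (ut t * tau) + 4 * t * Im tau\<bar> \<le> 4 * \<bar>Re tau\<bar> * t\<^sup>2 + 4 * \<bar>Im tau\<bar> * t\<^sup>2"
      unfolding key .
    have "\<bar>g t\<bar> \<le> (cmod (ut t))\<^sup>2 * K" using le[of t] t by simp
    also have "\<dots> \<le> (cmod (ut t))\<^sup>2 * \<bar>K\<bar>" by (rule mult_left_mono) auto
    also have "\<dots> \<le> 4 * t\<^sup>2 * \<bar>K\<bar>" by (rule mult_right_mono[OF ut_norm2_le]) auto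
    finally have e2: "\<bar>g t\<bar> \<le> 4 * t\<^sup>2 * \<bar>K\<bar>" .
    show "\<bar>e t\<bar> \<le> C * t\<^sup>2" unfolding e_def C_def using e1 e2 by (simp add: algebra_simps)
  qed
  then show ?thesis by simp
qed


lemma conj_mat_carrier[simp]: "conj_mat X \<in> carrier_mat n m \<longleftrightarrow> X \<in> carrier_mat n m"
  unfolding conj_mat_def by (rule map_carrier_mat)
lemma conj_mat_dims[simp]: "dim_row (conj_mat X) = dim_row X" "dim_col (conj_mat X) = dim_col X"
  by (simp_all add: conj_mat_def)
lemma conj_mat_index[simp]: "i < dim_row X \<Longrightarrow> j < dim_col X \<Longrightarrow> conj_mat X $$ (i,j) = cnj (X $$ (i,j))"
  by (simp add: conj_mat_def)

lemma conj_mat_mult: assumes "X \<in> carrier_mat n k" "Y \<in> carrier_mat k m"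
  shows "conj_mat (X * Y) = conj_mat X * conj_mat Y"
  by (rule eq_matI) (use assms in \<open>auto simp: scalar_prod_def\<close>)

lemma conj_mat_add: assumes "X \<in> carrier_mat n m" "Y \<in> carrier_mat n m"
  shows "conj_mat (X + Y) = conj_mat X + conj_mat Y"
  by (rule eq_matI) (use assms in auto)

lemma conj_mat_smult: "conj_mat (c \<cdot>\<^sub>m X) = cnj c \<cdot>\<^sub>m conj_mat X"
  by (rule eq_matI) auto

lemma conj_mat_one: "conj_mat (1\<^sub>m n) = 1\<^sub>m n"
  by (rule eq_matI) auto

lemma conj_mat_transpose: "conj_mat (transpose_mat X) = transpose_mat (conj_mat X)"
  by (rule eq_matI) auto

lemma transpose_smult: "transpose_mat (c \<cdot>\<^sub>m X) = c \<cdot>\<^sub>m transpose_mat X"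
  by (rule eq_matI) auto

lemma smult_smult_mat: "a \<cdot>\<^sub>m (b \<cdot>\<^sub>m (X :: complex mat)) = (a * b) \<cdot>\<^sub>m X"
  by (rule eq_matI) (auto simp: mult.assoc)

lemma idem_mult:
  fixes P :: "complex mat"
  assumes P: "P \<in> carrier_mat n n" and PP: "P * P = P"
  shows "(1\<^sub>m n + a \<cdot>\<^sub>m P) * (1\<^sub>m n + b \<cdot>\<^sub>m P) = 1\<^sub>m n + (a + b + a * b) \<cdot>\<^sub>m P"
proof -
  have "(1\<^sub>m n + a \<cdot>\<^sub>m P) * (1\<^sub>m n + b \<cdot>\<^sub>m P) = 1\<^sub>m n * (1\<^sub>m n + b \<cdot>\<^sub>m P) + (a \<cdot>\<^sub>m P) * (1\<^sub>m n + b \<cdot>\<^sub>m P)"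
    by (rule add_mult_distrib_mat) (use P in auto)
  also have "\<dots> = (1\<^sub>m n + b \<cdot>\<^sub>m P) + (a \<cdot>\<^sub>m P + (b * a) \<cdot>\<^sub>m P)"
  proof -
    have "(a \<cdot>\<^sub>m P) * (1\<^sub>m n + b \<cdot>\<^sub>m P) = (a \<cdot>\<^sub>m P) * 1\<^sub>m n + (a \<cdot>\<^sub>m P) * (b \<cdot>\<^sub>m P)"
      by (rule mult_add_distrib_mat) (use P in auto)
    also have "\<dots> = a \<cdot>\<^sub>m P + (b * a) \<cdot>\<^sub>m P"
      using P PP by (simp add: mult_smult_distrib[of _ n n] mult_smult_assoc_mat[of _ n n] smult_smult_mat)
    finally show ?thesis using P by simp
  qed
  also have "\<dots> = 1\<^sub>m n + (a + b + a * b) \<cdot>\<^sub>m P"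
    by (rule eq_matI) (use P in \<open>auto simp: algebra_simps\<close>)
  finally show ?thesis .
qed

lemma cmtrace_comm: assumes "X \<in> carrier_mat n n" "Y \<in> carrier_mat n n"
  shows "cmtrace (X * Y) = cmtrace (Y * X)"
proof -
  have "cmtrace (X * Y) = (\<Sum>i<n. \<Sum>k<n. X $$ (i,k) * Y $$ (k,i))"
    unfolding cmtrace_def using assms by (simp add: scalar_prod_def atLeast0LessThan)
  also have "\<dots> = (\<Sum>k<n. \<Sum>i<n. Y $$ (k,i) * X $$ (i,k))"
    by (subst sum.swap) (simp add: mult.commute)
  also have "\<dots> = cmtrace (Y * X)"
    unfolding cmtrace_def using assms by (simp add: scalar_prod_def atLeast0LessThan)
  finally show ?thesis .
qed

lemma cmtrace_transpose: assumes "X \<in> carrier_mat n n"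
  shows "cmtrace (transpose_mat X) = cmtrace X"
  unfolding cmtrace_def using assms by simp

lemma cmtrace_add: assumes "X \<in> carrier_mat n n" "Y \<in> carrier_mat n n"
  shows "cmtrace (X + Y) = cmtrace X + cmtrace Y"
  unfolding cmtrace_def using assms by (simp add: sum.distrib)



lemma conj_conj_mat[simp]: "conj_mat (conj_mat X) = X"
  by (rule eq_matI) auto

lemma herm_conj: assumes "adjoint_cmat P = P" shows "conj_mat P = transpose_mat P"
proof -
  have "conj_mat P = conj_mat (adjoint_cmat P)" using assms by simp
  also have "\<dots> = transpose_mat P" unfolding adjoint_cmat_def by simp
  finally show ?thesis .
qed

lemma one_plus_zero: "1\<^sub>m n + (0::complex) \<cdot>\<^sub>m X = 1\<^sub>m n" if "X \<in> carrier_mat n n"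
  by (rule eq_matI) (use that in auto)

lemma transpose_idem: fixes P :: "complex mat" assumes "P \<in> carrier_mat n n" "P * P = P"
  shows "transpose_mat P * transpose_mat P = transpose_mat P"
  using transpose_mult[OF assms(1) assms(1)] assms(2) by simp

lemmas ascn = assoc_mult_mat[where n\<^sub>1=n and n\<^sub>2=n and n\<^sub>3=n and n\<^sub>4=n] for n

lemma asc1: fixes a b c d e f :: "'a::comm_ring_1 mat"
  assumes "a \<in> carrier_mat n n" "b \<in> carrier_mat n n" "c \<in> carrier_mat n n" "d \<in> carrier_mat n n"
   "e \<in> carrier_mat n n" "f \<in> carrier_mat n n"
  shows "a * b * c * (d * e * f) = a * b * (c * d) * e * f"
  using assms by (simp add: ascn[of _ n])

lemma asc2: fixes a b e f :: "'a::comm_ring_1 mat"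
  assumes "a \<in> carrier_mat n n" "b \<in> carrier_mat n n" 
   "e \<in> carrier_mat n n" "f \<in> carrier_mat n n"
  shows "a * b * 1\<^sub>m n * e * f = a * (b * e) * f"
  using assms by (simp add: ascn[of _ n])

locale unit_setup =
  fixes n :: nat and P :: "complex mat" and u :: complex
  assumes P: "P \<in> carrier_mat n n" and PP: "P * P = P" and herm: "adjoint_cmat P = P"
    and hu: "u + cnj u + u * cnj u = 0"
begin

definition U where "U = 1\<^sub>m n + u \<cdot>\<^sub>m P"

lemma PT: "transpose_mat P \<in> carrier_mat n n" using P by simp
lemma PTPT: "transpose_mat P * transpose_mat P = transpose_mat P" using transpose_idem[OF P PP] .

lemma U_carrier: "U \<in> carrier_mat n n" using P by (simp add: U_def)
lemma UT: "transpose_mat U = 1\<^sub>m n + u \<cdot>\<^sub>m transpose_mat P"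
  unfolding U_def transpose_add[of "1\<^sub>m n" n n "u \<cdot>\<^sub>m P", OF one_carrier_mat smult_carrier_mat[OF P]]
  by (simp add: transpose_smult)
lemma cU: "conj_mat U = 1\<^sub>m n + cnj u \<cdot>\<^sub>m transpose_mat P"
  unfolding U_def conj_mat_add[OF one_carrier_mat smult_carrier_mat[OF P]]
  by (simp add: conj_mat_smult conj_mat_one herm_conj[OF herm])
lemma cUT: "conj_mat (transpose_mat U) = 1\<^sub>m n + cnj u \<cdot>\<^sub>m P"
  unfolding conj_mat_transpose cU transpose_add[of "1\<^sub>m n" n n "cnj u \<cdot>\<^sub>m transpose_mat P", OF one_carrier_mat smult_carrier_mat[OF PT]]
  by (simp add: transpose_smult)

lemma hu2: "cnj u + u + cnj u * u = 0" "u + cnj u + u * cnj u = 0"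
  using hu by (simp_all add: algebra_simps)

lemma cUT_U: "conj_mat (transpose_mat U) * U = 1\<^sub>m n"
proof -
  have "conj_mat (transpose_mat U) * U = (1\<^sub>m n + cnj u \<cdot>\<^sub>m P) * (1\<^sub>m n + u \<cdot>\<^sub>m P)"
    unfolding cUT by (simp add: U_def)
  then show ?thesis unfolding idem_mult[OF P PP] hu2 one_plus_zero[OF P] .
qed
lemma cU_UT: "conj_mat U * transpose_mat U = 1\<^sub>m n"
  unfolding cU UT idem_mult[OF PT PTPT] hu2 by (rule one_plus_zero[OF PT])
lemma UT_cU: "transpose_mat U * conj_mat U = 1\<^sub>m n"
  unfolding cU UT idem_mult[OF PT PTPT] hu2 by (rule one_plus_zero[OF PT])

lemma feasible_conj:
  assumes A: "A \<in> carrier_mat n n" and As: "transpose_mat A = A"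
  shows "transpose_mat (U * A * transpose_mat U) = U * A * transpose_mat U"
    and "similar_mat (adjoint_cmat (U * A * transpose_mat U) * (U * A * transpose_mat U)) (adjoint_cmat A * A)"
proof -
  have Uc: "U \<in> carrier_mat n n" by (rule U_carrier)
  have UAc: "U * A \<in> carrier_mat n n" using Uc A by simp
  have UTc: "transpose_mat U \<in> carrier_mat n n" using Uc by simp
  show T: "transpose_mat (U * A * transpose_mat U) = U * A * transpose_mat U"
    unfolding transpose_mult[OF UAc UTc] transpose_mult[OF Uc A] As transpose_transpose
    by (rule assoc_mult_mat[symmetric, OF Uc A UTc])
  have cA: "conj_mat A \<in> carrier_mat n n" using A by simp
  have cUc: "conj_mat U \<in> carrier_mat n n" using Uc by simp
  have cUTc: "conj_mat (transpose_mat U) \<in> carrier_mat n n" using Uc by simp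
  have adjA: "adjoint_cmat A = conj_mat A" unfolding adjoint_cmat_def As ..
  have "adjoint_cmat (U * A * transpose_mat U) = conj_mat (U * A * transpose_mat U)"
    unfolding adjoint_cmat_def T ..
  also have "\<dots> = conj_mat U * conj_mat A * conj_mat (transpose_mat U)"
    unfolding conj_mat_mult[OF UAc UTc] conj_mat_mult[OF Uc A] ..
  finally have adj: "adjoint_cmat (U * A * transpose_mat U) = conj_mat U * conj_mat A * conj_mat (transpose_mat U)" .
  have "adjoint_cmat (U * A * transpose_mat U) * (U * A * transpose_mat U)
      = conj_mat U * conj_mat A * (conj_mat (transpose_mat U) * U) * A * transpose_mat U"
    unfolding adj by (rule asc1[OF cUc cA cUTc Uc A UTc])
  also have "\<dots> = conj_mat U * (conj_mat A * A) * transpose_mat U"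
    unfolding cUT_U by (rule asc2[OF cUc cA A UTc])
  finally have eq: "adjoint_cmat (U * A * transpose_mat U) * (U * A * transpose_mat U)
      = conj_mat U * (adjoint_cmat A * A) * transpose_mat U" unfolding adjA .
  show "similar_mat (adjoint_cmat (U * A * transpose_mat U) * (U * A * transpose_mat U)) (adjoint_cmat A * A)"
    unfolding similar_mat_def
  proof (intro exI)
    show "similar_mat_wit (adjoint_cmat (U * A * transpose_mat U) * (U * A * transpose_mat U)) (adjoint_cmat A * A)
       (conj_mat U) (transpose_mat U)"
      by (rule similar_mat_witI[OF cU_UT UT_cU eq]) (use A Uc cA adjA eq UTc cUc in auto)
  qed
qed

lemma expand_conj:
  assumes A: "A \<in> carrier_mat n n"
  shows "U * A * transpose_mat U = A + u \<cdot>\<^sub>m ((P * A + A * transpose_mat P) + u \<cdot>\<^sub>m (P * A * transpose_mat P))"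
proof -
  define PA where "PA = P * A"
  define AP where "AP = A * transpose_mat P"
  define PAP where "PAP = P * A * transpose_mat P"
  have c: "PA \<in> carrier_mat n n" "AP \<in> carrier_mat n n" "PAP \<in> carrier_mat n n"
    using A P by (auto simp: PA_def AP_def PAP_def)
  have UA: "U * A = A + u \<cdot>\<^sub>m PA"
    unfolding U_def PA_def add_mult_distrib_mat[OF one_carrier_mat smult_carrier_mat[OF P] A]
      mult_smult_assoc_mat[OF P A] using A by simp
  have "U * A * transpose_mat U = (A + u \<cdot>\<^sub>m PA) * (1\<^sub>m n + u \<cdot>\<^sub>m transpose_mat P)"
    unfolding UA UT by simp
  also have "\<dots> = A + u \<cdot>\<^sub>m AP + (u \<cdot>\<^sub>m PA + (u * u) \<cdot>\<^sub>m PAP)"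
  proof -
    have "(A + u \<cdot>\<^sub>m PA) * (1\<^sub>m n + u \<cdot>\<^sub>m transpose_mat P)
        = A * (1\<^sub>m n + u \<cdot>\<^sub>m transpose_mat P) + (u \<cdot>\<^sub>m PA) * (1\<^sub>m n + u \<cdot>\<^sub>m transpose_mat P)"
      by (rule add_mult_distrib_mat) (use A c P in auto)
    moreover have "A * (1\<^sub>m n + u \<cdot>\<^sub>m transpose_mat P) = A + u \<cdot>\<^sub>m AP"
      unfolding AP_def mult_add_distrib_mat[OF A one_carrier_mat smult_carrier_mat[OF PT]]
        mult_smult_distrib[OF A PT] using A by simp
    moreover have "(u \<cdot>\<^sub>m PA) * (1\<^sub>m n + u \<cdot>\<^sub>m transpose_mat P) = u \<cdot>\<^sub>m PA + (u * u) \<cdot>\<^sub>m PAP"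
      unfolding mult_add_distrib_mat[OF smult_carrier_mat[OF c(1)] one_carrier_mat smult_carrier_mat[OF PT]]
        mult_smult_distrib[OF smult_carrier_mat[OF c(1)] PT] mult_smult_assoc_mat[OF c(1) PT] smult_smult_mat
      using c(1) right_mult_one_mat[OF smult_carrier_mat[OF c(1)]] by (simp add: PAP_def PA_def)
    ultimately show ?thesis by simp
  qed
  also have "\<dots> = A + u \<cdot>\<^sub>m ((PA + AP) + u \<cdot>\<^sub>m PAP)"
    by (rule eq_matI) (use A c in \<open>auto simp: algebra_simps\<close>)
  finally show ?thesis unfolding PA_def AP_def PAP_def .
qed

end



lemma sym_entry: assumes "A \<in> carrier_mat n n" "transpose_mat A = A" "x < n" "y < n"
  shows "A $$ (x, y) = A $$ (y, x)"
proof -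
  have "A $$ (x, y) = transpose_mat A $$ (x, y)" using assms(2) by simp
  also have "\<dots> = A $$ (y, x)" using assms(1,3,4) by simp
  finally show ?thesis .
qed

lemma ptrans2_carrier: "ptrans2 d1 d2 X \<in> carrier_mat (d1*d2) (d1*d2)"
  by (simp add: ptrans2_def)

lemma ptrans2_sym:
  assumes A: "A \<in> carrier_mat (d1*d2) (d1*d2)" and As: "transpose_mat A = A" and d2: "0 < d2"
  shows "transpose_mat (ptrans2 d1 d2 (conj_mat A)) = ptrans2 d1 d2 (conj_mat A)"
proof (rule eq_matI)
  fix i j assume i: "i < dim_row (ptrans2 d1 d2 (conj_mat A))" and j: "j < dim_col (ptrans2 d1 d2 (conj_mat A))"
  then have i': "i < d1*d2" and j': "j < d1*d2" by (simp_all add: ptrans2_def)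
  have b1: "(j div d2) * d2 + i mod d2 < d1*d2" using pi_lt[OF j'] d2 by simp
  have b2: "(i div d2) * d2 + j mod d2 < d1*d2" using pi_lt[OF i'] d2 by simp
  show "transpose_mat (ptrans2 d1 d2 (conj_mat A)) $$ (i, j) = ptrans2 d1 d2 (conj_mat A) $$ (i, j)"
    using i' j' b1 b2 A sym_entry[OF A As b1 b2] by (simp add: ptrans2_def)
qed (auto simp: ptrans2_def)

lemma tau_eq:
  assumes A: "A \<in> carrier_mat (d1*d2) (d1*d2)" and As: "transpose_mat A = A" and d2: "0 < d2"
    and P: "P \<in> carrier_mat (d1*d2) (d1*d2)"
  shows "Qf d1 d2 (P * A + A * transpose_mat P) A = 2 * cmtrace (P * (A * ptrans2 d1 d2 (conj_mat A)))"
proof -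
  define n where "n = d1 * d2"
  define K where "K = ptrans2 d1 d2 (conj_mat A)"
  have Kc: "K \<in> carrier_mat n n" unfolding K_def n_def by (rule ptrans2_carrier)
  have KT: "transpose_mat K = K" unfolding K_def by (rule ptrans2_sym[OF A As d2])
  have An: "A \<in> carrier_mat n n" and Pn: "P \<in> carrier_mat n n" using A P by (simp_all add: n_def)
  have PA: "P * A \<in> carrier_mat n n" using An Pn by simp
  have PT: "transpose_mat P \<in> carrier_mat n n" using Pn by simp
  have AP: "A * transpose_mat P \<in> carrier_mat n n" using An Pn by simp
  have AK: "A * K \<in> carrier_mat n n" using An Kc by simp
  have "Qf d1 d2 (P * A + A * transpose_mat P) A = cmtrace ((P * A + A * transpose_mat P) * K)"
    unfolding Qf_def K_def ..
  also have "\<dots> = cmtrace (P * A * K + A * transpose_mat P * K)"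
    unfolding add_mult_distrib_mat[OF PA AP Kc] ..
  also have "\<dots> = cmtrace (P * A * K) + cmtrace (A * transpose_mat P * K)"
    by (rule cmtrace_add[of _ n]) (use PA AP Kc in auto)
  also have "cmtrace (P * A * K) = cmtrace (P * (A * K))"
    using Pn An Kc by simp
  also have "cmtrace (A * transpose_mat P * K) = cmtrace (P * (A * K))"
  proof -
    have APK: "A * transpose_mat P * K \<in> carrier_mat n n" using AP Kc by simp
    have "cmtrace (A * transpose_mat P * K) = cmtrace (transpose_mat (A * transpose_mat P * K))"
      by (rule cmtrace_transpose[symmetric, OF APK])
    also have "transpose_mat (A * transpose_mat P * K) = K * (P * A)"
      unfolding transpose_mult[OF AP Kc] transpose_mult[OF An PT] KT As transpose_transpose ..
    also have "cmtrace (K * (P * A)) = cmtrace ((P * A) * K)"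
      by (rule cmtrace_comm[OF Kc PA])
    also have "\<dots> = cmtrace (P * (A * K))" using Pn An Kc by simp
    finally show ?thesis .
  qed
  finally show ?thesis unfolding K_def by simp
qed

lemma objective_Q: "objective d1 d2 B = Re (Qf d1 d2 B B) / real (d1 * d2)"
  unfolding objective_def Qf_def ..

lemma dist_bound:
  assumes A: "A \<in> carrier_mat n n" and E: "E \<in> carrier_mat n n" and F: "F \<in> carrier_mat n n"
    and u: "cmod u \<le> 2"
  shows "mat_dist A (A + u \<cdot>\<^sub>m (E + u \<cdot>\<^sub>m F))
    \<le> cmod u * sqrt (\<Sum>i<n. \<Sum>j<n. (cmod (E $$ (i,j)) + 2 * cmod (F $$ (i,j)))\<^sup>2)"
proof -
  have "(\<Sum>i<n. \<Sum>j<n. (cmod (A $$ (i,j) - (A + u \<cdot>\<^sub>m (E + u \<cdot>\<^sub>m F)) $$ (i,j)))\<^sup>2)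
      \<le> (\<Sum>i<n. \<Sum>j<n. (cmod u)\<^sup>2 * (cmod (E $$ (i,j)) + 2 * cmod (F $$ (i,j)))\<^sup>2)"
  proof (intro sum_mono)
    fix i j assume i: "i \<in> {..<n}" and j: "j \<in> {..<n}"
    have eq: "A $$ (i,j) - (A + u \<cdot>\<^sub>m (E + u \<cdot>\<^sub>m F)) $$ (i,j) = - (u * (E $$ (i,j) + u * F $$ (i,j)))"
      using i j A E F by simp
    have "cmod (E $$ (i,j) + u * F $$ (i,j)) \<le> cmod (E $$ (i,j)) + cmod (u * F $$ (i,j))"
      by (rule norm_triangle_ineq)
    also have "cmod (u * F $$ (i,j)) \<le> 2 * cmod (F $$ (i,j))"
      using u by (simp add: norm_mult mult_right_mono)
    finally have le: "cmod (E $$ (i,j) + u * F $$ (i,j)) \<le> cmod (E $$ (i,j)) + 2 * cmod (F $$ (i,j))" by simp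
    have "cmod (A $$ (i,j) - (A + u \<cdot>\<^sub>m (E + u \<cdot>\<^sub>m F)) $$ (i,j)) = cmod u * cmod (E $$ (i,j) + u * F $$ (i,j))"
      unfolding eq by (simp add: norm_mult)
    also have "\<dots> \<le> cmod u * (cmod (E $$ (i,j)) + 2 * cmod (F $$ (i,j)))"
      by (rule mult_left_mono[OF le]) simp
    finally have "cmod (A $$ (i,j) - (A + u \<cdot>\<^sub>m (E + u \<cdot>\<^sub>m F)) $$ (i,j)) \<le> cmod u * (cmod (E $$ (i,j)) + 2 * cmod (F $$ (i,j)))" .
    then have "(cmod (A $$ (i,j) - (A + u \<cdot>\<^sub>m (E + u \<cdot>\<^sub>m F)) $$ (i,j)))\<^sup>2 \<le> (cmod u * (cmod (E $$ (i,j)) + 2 * cmod (F $$ (i,j))))\<^sup>2"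
      by (rule power_mono) simp
    then show "(cmod (A $$ (i,j) - (A + u \<cdot>\<^sub>m (E + u \<cdot>\<^sub>m F)) $$ (i,j)))\<^sup>2 \<le> (cmod u)\<^sup>2 * (cmod (E $$ (i,j)) + 2 * cmod (F $$ (i,j)))\<^sup>2"
      by (simp add: power_mult_distrib)
  qed
  also have "\<dots> = (cmod u)\<^sup>2 * (\<Sum>i<n. \<Sum>j<n. (cmod (E $$ (i,j)) + 2 * cmod (F $$ (i,j)))\<^sup>2)"
    by (simp add: sum_distrib_left)
  finally have le: "(\<Sum>i<n. \<Sum>j<n. (cmod (A $$ (i,j) - (A + u \<cdot>\<^sub>m (E + u \<cdot>\<^sub>m F)) $$ (i,j)))\<^sup>2)
      \<le> (cmod u)\<^sup>2 * (\<Sum>i<n. \<Sum>j<n. (cmod (E $$ (i,j)) + 2 * cmod (F $$ (i,j)))\<^sup>2)" .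
  have "mat_dist A (A + u \<cdot>\<^sub>m (E + u \<cdot>\<^sub>m F)) = sqrt (\<Sum>i<n. \<Sum>j<n. (cmod (A $$ (i,j) - (A + u \<cdot>\<^sub>m (E + u \<cdot>\<^sub>m F)) $$ (i,j)))\<^sup>2)"
    unfolding mat_dist_def using A by simp
  also have "\<dots> \<le> sqrt ((cmod u)\<^sup>2 * (\<Sum>i<n. \<Sum>j<n. (cmod (E $$ (i,j)) + 2 * cmod (F $$ (i,j)))\<^sup>2))"
    using le by (rule real_sqrt_le_mono)
  also have "\<dots> = cmod u * sqrt (\<Sum>i<n. \<Sum>j<n. (cmod (E $$ (i,j)) + 2 * cmod (F $$ (i,j)))\<^sup>2)"
    by (simp add: real_sqrt_mult)
  finally show ?thesis .
qed

lemma ut_le: "cmod (ut t) \<le> 2 * \<bar>t\<bar>"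
proof -
  have "(cmod (ut t))\<^sup>2 \<le> (2 * \<bar>t\<bar>)\<^sup>2" using ut_norm2_le[of t] by (simp add: power_mult_distrib)
  then show ?thesis by (rule power2_le_imp_le) simp
qed



lemma key:
  assumes d1: "0 < d1" and d2: "0 < d2" and lm: "local_minimizer d1 d2 \<sigma> A"
    and P: "P \<in> carrier_mat (d1*d2) (d1*d2)" and PP: "P * P = P" and herm: "adjoint_cmat P = P"
  shows "Im (cmtrace (P * (A * ptrans2 d1 d2 (conj_mat A)))) = 0"
proof -
  define n where "n = d1*d2"
  have npos: "0 < n" using d1 d2 by (simp add: n_def)
  from lm obtain \<epsilon> where feasA: "feasible d1 d2 \<sigma> A" and eps: "\<epsilon> > 0" and
    min: "\<And>B. feasible d1 d2 \<sigma> B \<and> mat_dist A B < \<epsilon> \<longrightarrow> objective d1 d2 A \<le> objective d1 d2 B"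
    unfolding local_minimizer_def by blast
  from feasA have A: "A \<in> carrier_mat n n" and As: "transpose_mat A = A" and sv: "has_singular_values n A \<sigma>"
    unfolding feasible_def n_def by auto
  have Pn: "P \<in> carrier_mat n n" using P by (simp add: n_def)
  define E where "E = P * A + A * transpose_mat P"
  define F where "F = P * A * transpose_mat P"
  have E: "E \<in> carrier_mat n n" unfolding E_def using A Pn by simp
  have F: "F \<in> carrier_mat n n" unfolding F_def using A Pn by simp
  define W where "W = (\<Sum>i<n. \<Sum>j<n. (cmod (E $$ (i,j)) + 2 * cmod (F $$ (i,j)))\<^sup>2)"
  have W0: "0 \<le> W" unfolding W_def by (intro sum_nonneg) simp
  define tau where "tau = Qf d1 d2 E A"
  define Kc where "Kc = 2 * cmod (Qf d1 d2 F A) + cmod (Qf d1 d2 E E) + 2 * cmod (Qf d1 d2 E F)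
        + 2 * cmod (Qf d1 d2 F E) + 4 * cmod (Qf d1 d2 F F)"
  define At where "At t = A + ut t \<cdot>\<^sub>m (E + ut t \<cdot>\<^sub>m F)" for t
  define g where "g t = Re (Qf d1 d2 (At t) (At t)) - Re (Qf d1 d2 A A) - 2 * Re (ut t * tau)" for t
  define d where "d = min 1 (\<epsilon> / (2 * sqrt W + 1))"
  have feasAt: "feasible d1 d2 \<sigma> (At t)" for t
  proof -
    interpret unit_setup n P "ut t"
      by unfold_locales (use Pn PP herm ut_unit in auto)
    have eqA: "U * A * transpose_mat U = At t" unfolding At_def E_def F_def by (rule expand_conj[OF A])
    have T: "transpose_mat (At t) = At t" using feasible_conj(1)[OF A As] unfolding eqA .
    have S: "similar_mat (adjoint_cmat (At t) * At t) (adjoint_cmat A * A)"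
      using feasible_conj(2)[OF A As] unfolding eqA .
    have C: "At t \<in> carrier_mat n n" unfolding At_def using A E F by simp
    have cp: "char_poly (adjoint_cmat (At t) * At t) = char_poly (adjoint_cmat A * A)"
      by (rule char_poly_similar[OF S])
    show ?thesis using sv C T cp unfolding feasible_def has_singular_values_def n_def by auto
  qed
  have "Im tau = 0"
  proof (rule param_lemma[of d tau g Kc])
    have "0 < 2 * sqrt W + 1" using real_sqrt_ge_zero[OF W0] by linarith
    then show "0 < d" using eps by (simp add: d_def)
  next
    fix t assume t: "\<bar>t\<bar> < d"
    then have t1: "\<bar>t\<bar> < 1" and t2: "\<bar>t\<bar> < \<epsilon> / (2 * sqrt W + 1)" by (auto simp: d_def)
    have u2: "cmod (ut t) \<le> 2" using ut_le[of t] t1 by linarith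
    have A': "A \<in> carrier_mat (d1*d2) (d1*d2)" and E': "E \<in> carrier_mat (d1*d2) (d1*d2)"
      and F': "F \<in> carrier_mat (d1*d2) (d1*d2)" using A E F by (simp_all add: n_def)
    show "\<bar>g t\<bar> \<le> (cmod (ut t))\<^sup>2 * Kc"
      unfolding g_def At_def tau_def Kc_def by (rule expansion[OF A' E' F' d2 u2])
    have "mat_dist A (At t) \<le> cmod (ut t) * sqrt W" unfolding At_def W_def by (rule dist_bound[OF A E F u2])
    also have "\<dots> \<le> 2 * \<bar>t\<bar> * sqrt W" by (rule mult_right_mono[OF ut_le]) (use W0 in simp)
    also have "\<dots> < \<epsilon>"
    proof -
      have p: "0 < 2 * sqrt W + 1" using real_sqrt_ge_zero[OF W0] by linarith
      have "\<bar>t\<bar> * (2 * sqrt W + 1) < \<epsilon>" using t2 p by (simp add: pos_less_divide_eq)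
      moreover have "2 * \<bar>t\<bar> * sqrt W \<le> \<bar>t\<bar> * (2 * sqrt W + 1)" by (simp add: algebra_simps)
      ultimately show ?thesis by linarith
    qed
    finally have "mat_dist A (At t) < \<epsilon>" .
    then have "objective d1 d2 A \<le> objective d1 d2 (At t)" using min feasAt by blast
    then have "Re (Qf d1 d2 A A) \<le> Re (Qf d1 d2 (At t) (At t))"
      unfolding objective_Q using npos by (simp add: n_def divide_le_cancel)
    then show "0 \<le> 2 * Re (ut t * tau) + g t" unfolding g_def by simp
  qed
  moreover have "tau = 2 * cmtrace (P * (A * ptrans2 d1 d2 (conj_mat A)))"
    unfolding tau_def E_def by (rule tau_eq) (use A As d2 P in \<open>simp_all add: n_def\<close>)
  ultimately show ?thesis by simp
qed



definition pv :: "nat \<Rightarrow> (nat \<Rightarrow> complex) \<Rightarrow> complex mat" where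
  "pv n v = mat n n (\<lambda>(i,j). v i * cnj (v j) / complex_of_real (\<Sum>k<n. (cmod (v k))\<^sup>2))"

lemma pv_carrier: "pv n v \<in> carrier_mat n n"
  by (simp add: pv_def)

lemma sum_norm_sq: "(\<Sum>k<n. v k * cnj (v k)) = complex_of_real (\<Sum>k<n. (cmod (v k))\<^sup>2)"
  unfolding of_real_sum by (rule sum.cong[OF refl], rule complex_norm_square[symmetric])

lemma pv_idem: assumes s: "0 < (\<Sum>k<n. (cmod (v k))\<^sup>2)"
  shows "pv n v * pv n v = pv n v"
proof (rule eq_matI)
  define S where "S = complex_of_real (\<Sum>k<n. (cmod (v k))\<^sup>2)"
  have S0: "S \<noteq> 0" using s unfolding S_def of_real_eq_0_iff by simp
  fix i j assume i: "i < dim_row (pv n v)" and j: "j < dim_col (pv n v)"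
  then have i': "i < n" and j': "j < n" by (simp_all add: pv_def)
  have "(pv n v * pv n v) $$ (i,j) = (\<Sum>k<n. (v i * cnj (v k) / S) * (v k * cnj (v j) / S))"
    using i' j' by (simp add: pv_def scalar_prod_def S_def atLeast0LessThan)
  also have "\<dots> = (\<Sum>k<n. (v i * cnj (v j) / (S * S)) * (v k * cnj (v k)))"
    by (rule sum.cong) (simp_all add: field_simps)
  also have "\<dots> = (v i * cnj (v j) / (S * S)) * S"
    unfolding sum_distrib_left[symmetric] sum_norm_sq S_def ..
  also have "\<dots> = v i * cnj (v j) / S" using S0 by (simp add: field_simps)
  also have "\<dots> = pv n v $$ (i,j)" using i' j' by (simp add: pv_def S_def)
  finally show "(pv n v * pv n v) $$ (i,j) = pv n v $$ (i,j)" .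
qed (simp_all add: pv_def)

lemma pv_herm: "adjoint_cmat (pv n v) = pv n v"
  unfolding adjoint_cmat_def by (rule eq_matI) (auto simp: pv_def)

lemma pv_trace: assumes M: "M \<in> carrier_mat n n"
  shows "cmtrace (pv n v * M) = (\<Sum>i<n. \<Sum>k<n. v i * cnj (v k) * M $$ (k,i)) / complex_of_real (\<Sum>k<n. (cmod (v k))\<^sup>2)"
  unfolding cmtrace_def using M
  by (simp add: pv_def scalar_prod_def atLeast0LessThan sum_divide_distrib)

lemma sum_two:
  fixes f :: "nat \<Rightarrow> 'a::comm_ring_1"
  assumes "p < n" "q < n" "p \<noteq> q"
  shows "(\<Sum>k<n. (if k = p then a else if k = q then b else 0) * f k) = a * f p + b * f q"
proof -
  have "(\<Sum>k<n. (if k = p then a else if k = q then b else 0) * f k)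
      = (\<Sum>k<n. (if k = p then a * f p else 0) + (if k = q then b * f q else 0))"
    by (rule sum.cong) (use assms in auto)
  also have "\<dots> = a * f p + b * f q" using assms by (simp add: sum.distrib)
  finally show ?thesis .
qed

definition vf :: "nat \<Rightarrow> nat \<Rightarrow> complex \<Rightarrow> nat \<Rightarrow> complex" where
  "vf p q w k = (if k = p then 1 else if k = q then w else 0)"

lemma vf_s: assumes "p < n" "q < n" "p \<noteq> q"
  shows "(\<Sum>k<n. (cmod (vf p q w k))\<^sup>2) = 1 + (cmod w)\<^sup>2"
proof -
  have "(\<Sum>k<n. (cmod (vf p q w k))\<^sup>2) = (\<Sum>k<n. (if k = p then 1 else if k = q then (cmod w)\<^sup>2 else 0) * (1::real))"
    by (rule sum.cong) (auto simp: vf_def)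
  also have "\<dots> = 1 + (cmod w)\<^sup>2" by (subst sum_two) (use assms in auto)
  finally show ?thesis .
qed

lemma vf_double: assumes "p < n" "q < n" "p \<noteq> q"
  shows "(\<Sum>i<n. \<Sum>k<n. vf p q w i * cnj (vf p q w k) * M $$ (k,i))
    = M $$ (p,p) + cnj w * M $$ (q,p) + w * (M $$ (p,q) + cnj w * M $$ (q,q))"
proof -
  have inner: "(\<Sum>k<n. vf p q w i * cnj (vf p q w k) * M $$ (k,i))
     = vf p q w i * (M $$ (p,i) + cnj w * M $$ (q,i))" for i
  proof -
    have "(\<Sum>k<n. vf p q w i * cnj (vf p q w k) * M $$ (k,i))
        = (\<Sum>k<n. (if k = p then 1 else if k = q then cnj w else 0) * (vf p q w i * M $$ (k,i)))"
      by (rule sum.cong) (auto simp: vf_def)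
    also have "\<dots> = vf p q w i * M $$ (p,i) + cnj w * (vf p q w i * M $$ (q,i))"
      by (subst sum_two[OF assms]) simp
    finally show ?thesis by (simp add: algebra_simps)
  qed
  have "(\<Sum>i<n. \<Sum>k<n. vf p q w i * cnj (vf p q w k) * M $$ (k,i))
      = (\<Sum>i<n. (if i = p then 1 else if i = q then w else 0) * (M $$ (p,i) + cnj w * M $$ (q,i)))"
    unfolding inner by (simp add: vf_def)
  also have "\<dots> = M $$ (p,p) + cnj w * M $$ (q,p) + w * (M $$ (p,q) + cnj w * M $$ (q,q))"
    by (subst sum_two[OF assms]) simp
  finally show ?thesis .
qed


theorem proposition8:
  fixes d1 d2 :: nat and \<sigma> :: "nat \<Rightarrow> real" and A :: "complex mat"
  assumes "d1 \<ge> 3" and "odd d1" and "d2 \<ge> 1"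
    and "\<forall>k<d1 * d2. \<sigma> k \<ge> 0"
    and "local_minimizer d1 d2 \<sigma> A"
  shows "hermitian_cmat (A * ptrans2 d1 d2 (conj_mat A))"
proof -
  define n where "n = d1 * d2"
  have d1: "0 < d1" and d2: "0 < d2" using assms(1,3) by auto
  have n2: "2 \<le> n" unfolding n_def using mult_le_mono[OF assms(1) assms(3)] by simp
  have A: "A \<in> carrier_mat n n" using assms(5) unfolding local_minimizer_def feasible_def n_def by auto
  define M where "M = A * ptrans2 d1 d2 (conj_mat A)"
  have M: "M \<in> carrier_mat n n" unfolding M_def n_def using A ptrans2_carrier by (simp add: n_def)
  have tr: "Im (\<Sum>i<n. \<Sum>k<n. v i * cnj (v k) * M $$ (k,i)) = 0"
    if s: "0 < (\<Sum>k<n. (cmod (v k))\<^sup>2)" for v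
  proof -
    have "Im (cmtrace (pv n v * M)) = 0"
      unfolding M_def n_def
      by (rule key[OF d1 d2 assms(5)]) (use pv_carrier[where n="d1*d2" and v=v] pv_idem[where n="d1*d2" and v=v] pv_herm s in \<open>auto simp: n_def\<close>)
    then have "Im ((\<Sum>i<n. \<Sum>k<n. v i * cnj (v k) * M $$ (k,i)) / complex_of_real (\<Sum>k<n. (cmod (v k))\<^sup>2)) = 0"
      unfolding pv_trace[OF M] .
    then show ?thesis using s by (simp add: Im_divide_of_real)
  qed
  have two: "Im (M $$ (p,p) + cnj w * M $$ (q,p) + w * (M $$ (p,q) + cnj w * M $$ (q,q))) = 0"
    if "p < n" "q < n" "p \<noteq> q" for p q w
  proof -
    have "0 < (\<Sum>k<n. (cmod (vf p q w k))\<^sup>2)" unfolding vf_s[OF that]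
      using zero_le_power2[of "cmod w"] by linarith
    from tr[OF this] show ?thesis unfolding vf_double[OF that] .
  qed
  have diag: "Im (M $$ (p,p)) = 0" if p: "p < n" for p
  proof -
    define q :: nat where "q = (if p = 0 then 1 else 0)"
    have "q < n" "p \<noteq> q" using n2 p by (auto simp: q_def)
    from two[OF p this, of 0] show ?thesis by simp
  qed
  have off: "cnj (M $$ (q,p)) = M $$ (p,q)" if "p < n" "q < n" "p \<noteq> q" for p q
  proof -
    have h1: "Im (M $$ (p,p) + M $$ (q,p) + (M $$ (p,q) + M $$ (q,q))) = 0"
      using two[OF that, of 1] by simp
    have hi: "Im (M $$ (p,p) + cnj \<i> * M $$ (q,p) + \<i> * (M $$ (p,q) + cnj \<i> * M $$ (q,q))) = 0"
      using two[OF that, of \<i>] .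
    have dp: "Im (M $$ (p,p)) = 0" and dq: "Im (M $$ (q,q)) = 0" using diag that by auto
    have "Im (M $$ (q,p)) + Im (M $$ (p,q)) = 0" using h1 dp dq by simp
    moreover have "Re (M $$ (p,q)) - Re (M $$ (q,p)) = 0" using hi dp dq by (simp add: algebra_simps)
    ultimately show ?thesis by (simp add: complex_eq_iff)
  qed
  show ?thesis unfolding hermitian_cmat_def adjoint_cmat_def M_def[symmetric]
  proof (rule eq_matI)
    fix i j assume i: "i < dim_row M" and j: "j < dim_col M"
    then have i': "i < n" and j': "j < n" using M by auto
    have "conj_mat (transpose_mat M) $$ (i,j) = cnj (M $$ (j,i))" using i' j' M by simp
    also have "\<dots> = M $$ (i,j)"
    proof (cases "i = j")
      case True then show ?thesis using diag[OF i'] by (simp add: complex_eq_iff)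
    next
      case False then show ?thesis using off[OF i' j'] by simp
    qed
    finally show "conj_mat (transpose_mat M) $$ (i,j) = M $$ (i,j)" .
  qed (use M in auto)
qed

end
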